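(* Consider a cooperative multi-agent MDP with $N$ agents, finite individual state space $\mathcal S$ and finite individual action space $\mathcal A$ whose reward $\mathrm r$ and transition kernel $\mathbb P$ satisfy $\mathrm r(\mathbf s,\mathbf a)=\mathrm r(\kappa(\mathbf s),\kappa(\mathbf a))$ and $\mathbb P(\mathbf s'\mid\mathbf s,\mathbf a)=\mathbb P(\kappa(\mathbf s')\mid\kappa(\mathbf s),\kappa(\mathbf a))$ for all joint states/actions and all permutations $\kappa$ of the agents, and let $\nu(\mathbf a\mid\mathbf s)=\prod_{i=1}^N\mu(a_i\mid s_i)$ be a factorized policy with a shared local map $\mu$. Fix an agent, write its state as $s$ and the states of the remaining $N-1$ agents as $\mathbf s_r\in\mathcal S^{N-1}$, and write $V^\nu(s,\mathbf s_r)$ for the value of the corresponding joint state. Then for every permutation $\kappa$ of the remaining agents, $V^\nu(s,\mathbf s_r)=V^\nu(s,\kappa(\mathbf s_r))$. Moreover, there exists a function $g_\nu$ such that $V^\nu(s,\mathbf s_r)=g_\nu(s,\hat{\mathrm p}_{\mathbf s_r})$ for all $s,\mathbf s_r$, where $\hat{\mathrm p}_{\mathbf s_r}=\frac1N\sum_{s'\in\mathbf s_r}\delta_{s'}$.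
   Context: $\delta_x$ denotes the Dirac measure at $x$; the sum over $s'\in\mathbf s_r$ runs over the $N-1$ coordinates of $\mathbf s_r$ with multiplicity. The value function is $V^\nu(\mathbf s)=(1-\gamma)\mathbb E\{\sum_{t\ge0}\gamma^t\mathrm r(\mathbf s_t,\mathbf a_t)\mid \mathbf s_0=\mathbf s,\ \mathbf a_t\sim\nu(\cdot\mid\mathbf s_t)\}$ for a discount factor $\gamma\in(0,1)$. *)

theory Defs
  imports "HOL-Analysis.Analysis" "HOL-Combinatorics.Permutations"
begin

text \<open>Joint states / joint actions of N agents are lists of length N.\<close>
definition joint :: "nat \<Rightarrow> 'x list set" where
  "joint N = {xs. length xs = N}"

definition fact_pol :: "('s \<Rightarrow> 'a \<Rightarrow> real) \<Rightarrow> 's list \<Rightarrow> 'a list \<Rightarrow> real" where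
  "fact_pol \<mu> s a = (\<Prod>i<length s. \<mu> (s ! i) (a ! i))"

text \<open>Distribution of the joint state at time t of the Markov chain started in s0,
  actions drawn from nu, transitions by the kernel P (P s a s' = P(s' | s, a)).\<close>
fun state_dist :: "nat \<Rightarrow> ('s list \<Rightarrow> 'a list \<Rightarrow> 's list \<Rightarrow> real) \<Rightarrow>
    ('s \<Rightarrow> 'a \<Rightarrow> real) \<Rightarrow> 's list \<Rightarrow> nat \<Rightarrow> 's list \<Rightarrow> real" where
  "state_dist N P \<mu> s0 0 = (\<lambda>s. if s = s0 then 1 else 0)"
| "state_dist N P \<mu> s0 (Suc t) = (\<lambda>s'. \<Sum>s\<in>joint N. state_dist N P \<mu> s0 t s *
      (\<Sum>a\<in>joint N. fact_pol \<mu> s a * P s a s'))"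

text \<open>V^nu(s0) = (1-gamma) E[sum_t gamma^t r(s_t,a_t)], the expectation written out
  (by linearity) via the time-t state distributions.\<close>
definition value_fn :: "nat \<Rightarrow> ('s list \<Rightarrow> 'a list \<Rightarrow> real) \<Rightarrow>
    ('s list \<Rightarrow> 'a list \<Rightarrow> 's list \<Rightarrow> real) \<Rightarrow> ('s \<Rightarrow> 'a \<Rightarrow> real) \<Rightarrow> real \<Rightarrow> 's list \<Rightarrow> real" where
  "value_fn N r P \<mu> \<gamma> s0 = (1 - \<gamma>) * (\<Sum>t. \<gamma> ^ t *
     (\<Sum>s\<in>joint N. state_dist N P \<mu> s0 t s * (\<Sum>a\<in>joint N. fact_pol \<mu> s a * r s a)))"

definition ins_agent :: "nat \<Rightarrow> 's \<Rightarrow> 's list \<Rightarrow> 's list" where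
  "ins_agent i s sr = take i sr @ s # drop i sr"

definition emp_meas :: "nat \<Rightarrow> 's list \<Rightarrow> 's \<Rightarrow> real" where
  "emp_meas N sr x = real (count_list sr x) / real N"

end

theory Submission
  imports Defs
begin

lemma pl_inv:
  assumes k: "k permutes {..<length xs}"
  shows "permute_list (inv k) (permute_list k xs) = xs"
    "permute_list k (permute_list (inv k) xs) = xs"
proof -
  have ik: "inv k permutes {..<length xs}" using k by (simp add: permutes_inv)
  have "permute_list (inv k) (permute_list k xs) = permute_list (k \<circ> inv k) xs"
    using permute_list_compose[OF ik] by simp
  also have "\<dots> = xs" using permutes_inv_o(1)[OF k] by simp
  finally show "permute_list (inv k) (permute_list k xs) = xs" .
  have "permute_list k (permute_list (inv k) xs) = permute_list (inv k \<circ> k) xs"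
    using permute_list_compose[OF k] by simp
  also have "\<dots> = xs" using permutes_inv_o(2)[OF k] by simp
  finally show "permute_list k (permute_list (inv k) xs) = xs" .
qed

lemma pl_bij:
  assumes k: "k permutes {..<N}"
  shows "bij_betw (permute_list k) (joint N) (joint N)"
  apply (rule bij_betw_byWitness[where f'="permute_list (inv k)"])
  using k pl_inv by (auto simp: joint_def)

lemma sum_pl:
  assumes k: "k permutes {..<N}"
  shows "(\<Sum>x\<in>joint N. f (permute_list k x)) = (\<Sum>x\<in>joint N. f x)"
  using sum.reindex_bij_betw[OF pl_bij[OF k], of f] .

lemma fact_pol_pl:
  assumes k: "k permutes {..<N}" and s: "s \<in> joint N" and a: "a \<in> joint N"
  shows "fact_pol \<mu> (permute_list k s) (permute_list k a) = fact_pol \<mu> s a"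
proof -
  have "fact_pol \<mu> (permute_list k s) (permute_list k a) = (\<Prod>j<N. \<mu> (s ! k j) (a ! k j))"
    using k s a by (simp add: fact_pol_def joint_def permute_list_nth)
  also have "\<dots> = (\<Prod>j<N. \<mu> (s ! j) (a ! j))"
    using prod.reindex_bij_betw[OF permutes_imp_bij[OF k], of "\<lambda>j. \<mu> (s ! j) (a ! j)"] by simp
  finally show ?thesis using s by (simp add: fact_pol_def joint_def)
qed

lemma sd_pl:
  assumes k: "k permutes {..<N}" and s0: "s0 \<in> joint N"
    and P_inv: "\<And>\<kappa> s a s'. \<kappa> permutes {..<N} \<Longrightarrow> s \<in> joint N \<Longrightarrow> a \<in> joint N \<Longrightarrow> s' \<in> joint N \<Longrightarrow>
                 P s a s' = P (permute_list \<kappa> s) (permute_list \<kappa> a) (permute_list \<kappa> s')"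
  shows "s \<in> joint N \<Longrightarrow> state_dist N P \<mu> (permute_list k s0) t (permute_list k s) = state_dist N P \<mu> s0 t s"
proof (induction t arbitrary: s)
  case 0
  have "permute_list k s = permute_list k s0 \<longleftrightarrow> s = s0"
    using bij_betw_imp_inj_on[OF pl_bij[OF k]] 0 s0 by (auto dest: inj_onD)
  then show ?case by simp
next
  case (Suc t)
  have "state_dist N P \<mu> (permute_list k s0) (Suc t) (permute_list k s)
     = (\<Sum>u\<in>joint N. state_dist N P \<mu> (permute_list k s0) t (permute_list k u) *
      (\<Sum>b\<in>joint N. fact_pol \<mu> (permute_list k u) (permute_list k b) * P (permute_list k u) (permute_list k b) (permute_list k s)))"
    by (simp add: sum_pl[OF k, where f="\<lambda>u. state_dist N P \<mu> (permute_list k s0) t u *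
      (\<Sum>a\<in>joint N. fact_pol \<mu> u a * P u a (permute_list k s))"]
       sum_pl[OF k, where f="\<lambda>a. fact_pol \<mu> _ a * P _ a (permute_list k s)"])
  also have "\<dots> = (\<Sum>u\<in>joint N. state_dist N P \<mu> s0 t u *
      (\<Sum>b\<in>joint N. fact_pol \<mu> u b * P u b s))"
    apply (rule sum.cong[OF refl])
    apply (subst Suc.IH, assumption)
    apply (rule arg_cong[where f="\<lambda>x. _ * x"])
    apply (rule sum.cong[OF refl])
    using Suc.prems by (simp add: fact_pol_pl[OF k] P_inv[OF k, symmetric])
  finally show ?case by simp
qed

lemma value_pl:
  assumes k: "k permutes {..<N}" and s0: "s0 \<in> joint N"
    and P_inv: "\<And>\<kappa> s a s'. \<kappa> permutes {..<N} \<Longrightarrow> s \<in> joint N \<Longrightarrow> a \<in> joint N \<Longrightarrow> s' \<in> joint N \<Longrightarrow>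
                 P s a s' = P (permute_list \<kappa> s) (permute_list \<kappa> a) (permute_list \<kappa> s')"
    and r_inv: "\<And>\<kappa> s a. \<kappa> permutes {..<N} \<Longrightarrow> s \<in> joint N \<Longrightarrow> a \<in> joint N \<Longrightarrow>
                 r s a = r (permute_list \<kappa> s) (permute_list \<kappa> a)"
  shows "value_fn N r P \<mu> \<gamma> (permute_list k s0) = value_fn N r P \<mu> \<gamma> s0"
proof -
  have "(\<Sum>s\<in>joint N. state_dist N P \<mu> (permute_list k s0) t s * (\<Sum>a\<in>joint N. fact_pol \<mu> s a * r s a))
      = (\<Sum>s\<in>joint N. state_dist N P \<mu> s0 t s * (\<Sum>a\<in>joint N. fact_pol \<mu> s a * r s a))" for t
  proof -
    have "(\<Sum>s\<in>joint N. state_dist N P \<mu> (permute_list k s0) t s * (\<Sum>a\<in>joint N. fact_pol \<mu> s a * r s a))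
      = (\<Sum>s\<in>joint N. state_dist N P \<mu> (permute_list k s0) t (permute_list k s) *
          (\<Sum>a\<in>joint N. fact_pol \<mu> (permute_list k s) (permute_list k a) * r (permute_list k s) (permute_list k a)))"
      by (simp add: sum_pl[OF k, where f="\<lambda>u. state_dist N P \<mu> (permute_list k s0) t u *
          (\<Sum>a\<in>joint N. fact_pol \<mu> u a * r u a)"]
       sum_pl[OF k, where f="\<lambda>a. fact_pol \<mu> _ a * r _ a"])
    also have "\<dots> = (\<Sum>s\<in>joint N. state_dist N P \<mu> s0 t s * (\<Sum>a\<in>joint N. fact_pol \<mu> s a * r s a))"
      apply (rule sum.cong[OF refl])
      apply (subst sd_pl[where P=P and \<mu>=\<mu>, OF k s0 P_inv], assumption+)
      apply (rule arg_cong[where f="\<lambda>x. _ * x"])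
      apply (rule sum.cong[OF refl])
      by (simp add: fact_pol_pl[OF k] r_inv[OF k, symmetric])
    finally show ?thesis .
  qed
  then show ?thesis by (simp add: value_fn_def)
qed

lemma value_mset:
  assumes "mset x = mset y" and y: "y \<in> joint N"
    and P_inv: "\<And>\<kappa> s a s'. \<kappa> permutes {..<N} \<Longrightarrow> s \<in> joint N \<Longrightarrow> a \<in> joint N \<Longrightarrow> s' \<in> joint N \<Longrightarrow>
                 P s a s' = P (permute_list \<kappa> s) (permute_list \<kappa> a) (permute_list \<kappa> s')"
    and r_inv: "\<And>\<kappa> s a. \<kappa> permutes {..<N} \<Longrightarrow> s \<in> joint N \<Longrightarrow> a \<in> joint N \<Longrightarrow>
                 r s a = r (permute_list \<kappa> s) (permute_list \<kappa> a)"
  shows "value_fn N r P \<mu> \<gamma> x = value_fn N r P \<mu> \<gamma> y"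
proof -
  obtain p where p: "p permutes {..<length y}" "permute_list p y = x"
    using mset_eq_permutation[OF assms(1)] by blast
  have "p permutes {..<N}" using p y by (simp add: joint_def)
  then have "value_fn N r P \<mu> \<gamma> (permute_list p y) = value_fn N r P \<mu> \<gamma> y"
    by (rule value_pl[of p N y P r \<mu> \<gamma>, OF _ y P_inv r_inv])
  then show ?thesis using p(2) by simp
qed

lemma mset_ins: "mset (ins_agent i s x) = mset (ins_agent i s y) \<longleftrightarrow> mset x = mset y"
proof -
  have "mset (ins_agent i s x) = add_mset s (mset x)" for x :: "'a list"
    unfolding ins_agent_def by (metis append_take_drop_id mset_append union_mset_add_mset_right mset.simps(2))
  then show ?thesis by simp
qed

lemma len_ins: "length sr = N - 1 \<Longrightarrow> i < N \<Longrightarrow> ins_agent i s sr \<in> joint N"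
  by (simp add: ins_agent_def joint_def)

theorem proposition2:
  fixes N :: nat and i :: nat
    and r :: "('s::finite) list \<Rightarrow> ('a::finite) list \<Rightarrow> real"
    and P :: "'s list \<Rightarrow> 'a list \<Rightarrow> 's list \<Rightarrow> real"
    and \<mu> :: "'s \<Rightarrow> 'a \<Rightarrow> real" and \<gamma> :: real
  assumes agent: "i < N"
    and gamma: "0 < \<gamma>" "\<gamma> < 1"
    and P_nonneg: "\<And>s a s'. s \<in> joint N \<Longrightarrow> a \<in> joint N \<Longrightarrow> s' \<in> joint N \<Longrightarrow> P s a s' \<ge> 0"
    and P_sum: "\<And>s a. s \<in> joint N \<Longrightarrow> a \<in> joint N \<Longrightarrow> (\<Sum>s'\<in>joint N. P s a s') = 1"
    and mu_nonneg: "\<And>s a. \<mu> s a \<ge> 0"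
    and mu_sum: "\<And>s. (\<Sum>a\<in>UNIV. \<mu> s a) = 1"
    and r_inv: "\<And>\<kappa> s a. \<kappa> permutes {..<N} \<Longrightarrow> s \<in> joint N \<Longrightarrow> a \<in> joint N \<Longrightarrow>
                 r s a = r (permute_list \<kappa> s) (permute_list \<kappa> a)"
    and P_inv: "\<And>\<kappa> s a s'. \<kappa> permutes {..<N} \<Longrightarrow> s \<in> joint N \<Longrightarrow> a \<in> joint N \<Longrightarrow> s' \<in> joint N \<Longrightarrow>
                 P s a s' = P (permute_list \<kappa> s) (permute_list \<kappa> a) (permute_list \<kappa> s')"
  shows "(\<forall>s sr \<kappa>. length sr = N - 1 \<longrightarrow> \<kappa> permutes {..<N - 1} \<longrightarrow>
            value_fn N r P \<mu> \<gamma> (ins_agent i s sr)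
              = value_fn N r P \<mu> \<gamma> (ins_agent i s (permute_list \<kappa> sr)))
       \<and> (\<exists>g. \<forall>s sr. length sr = N - 1 \<longrightarrow>
            value_fn N r P \<mu> \<gamma> (ins_agent i s sr) = g s (emp_meas N sr))"
proof
  have key: "value_fn N r P \<mu> \<gamma> (ins_agent i s x) = value_fn N r P \<mu> \<gamma> (ins_agent i s y)"
    if "mset x = mset y" "length y = N - 1" for s x y
  proof -
    have m: "mset (ins_agent i s x) = mset (ins_agent i s y)" using that(1) by (simp only: mset_ins)
    show ?thesis
      by (rule value_mset[of "ins_agent i s x" "ins_agent i s y" N P r \<mu> \<gamma>, OF m
        len_ins[OF that(2) agent] P_inv r_inv])
  qed
  show "\<forall>s sr \<kappa>. length sr = N - 1 \<longrightarrow> \<kappa> permutes {..<N - 1} \<longrightarrow>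
            value_fn N r P \<mu> \<gamma> (ins_agent i s sr)
              = value_fn N r P \<mu> \<gamma> (ins_agent i s (permute_list \<kappa> sr))"
  proof (intro allI impI)
    fix s and sr :: "'s list" and \<kappa>
    assume len: "length sr = N - 1" and pk: "\<kappa> permutes {..<N - 1}"
    have "mset (permute_list \<kappa> sr) = mset sr" using pk len by (simp add: mset_permute_list)
    then show "value_fn N r P \<mu> \<gamma> (ins_agent i s sr)
              = value_fn N r P \<mu> \<gamma> (ins_agent i s (permute_list \<kappa> sr))"
      using key[of "permute_list \<kappa> sr" sr s] len by simp
  qed
  define g where "g s m = value_fn N r P \<mu> \<gamma> (ins_agent i s (SOME sr. length sr = N - 1 \<and> emp_meas N sr = m))" for s m
  show "\<exists>g. \<forall>s sr. length sr = N - 1 \<longrightarrow>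
            value_fn N r P \<mu> \<gamma> (ins_agent i s sr) = g s (emp_meas N sr)"
  proof (intro exI allI impI)
    fix s and sr :: "'s list"
    assume len: "length sr = N - 1"
    define y where "y = (SOME y. length y = N - 1 \<and> emp_meas N y = emp_meas N sr)"
    have y: "length y = N - 1 \<and> emp_meas N y = emp_meas N sr"
      unfolding y_def by (rule someI[of _ sr]) (simp add: len)
    have "count_list y z = count_list sr z" for z
      using fun_cong[OF conjunct2[OF y], of z] agent by (simp add: emp_meas_def)
    then have "mset sr = mset y" by (simp add: multiset_eq_iff count_mset)
    then show "value_fn N r P \<mu> \<gamma> (ins_agent i s sr) = g s (emp_meas N sr)"
      using key[OF \<open>mset sr = mset y\<close>] y unfolding g_def y_def by simp
  qed
qed

end
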